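(* Let $\alpha=(\alpha_1,\dots,\alpha_r)\in\mathbb{T}^r$, $D=\{\alpha_1,\dots,\alpha_r\}$, and suppose $\Lambda(\alpha)$ has a generating set (as a group) in which every generator has even coordinate sum. Then $\mathrm{Md}_{\mathbb{T}}(D)=1/2$. Moreover, if $\alpha\notin\mathbb{Q}^r$ (modulo 1), then no Borel set $A\subset\mathbb{T}$ with $(A-A)\cap D=\emptyset$ satisfies $\mu(A)=1/2$.
   Context: $\mathbb{T}=\mathbb{R}/\mathbb{Z}$ with Haar probability measure $\mu$. $\Lambda(\alpha)=\{n\in\mathbb{Z}^r: n_1\alpha_1+\cdots+n_r\alpha_r=0\text{ in }\mathbb{T}\}$. $\mathrm{Md}_{\mathbb{T}}(D)=\sup\{\mu(A): A\subset\mathbb{T}\text{ Borel},\ (A-A)\cap D=\emptyset\}$. *)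

theory Defs
  imports "HOL-Analysis.Analysis"
begin

text \<open>The circle T = R/Z is modelled by the fundamental domain [0,1) with Lebesgue
  (Borel) measure, which is the Haar probability measure.  A point alpha of T^r is given
  by real representatives alpha 0, ..., alpha (r-1); everything below only depends on them mod 1.\<close>

definition diff_avoids :: "nat \<Rightarrow> (nat \<Rightarrow> real) \<Rightarrow> real set \<Rightarrow> bool" where
  "diff_avoids r \<alpha> A \<longleftrightarrow> (\<forall>x\<in>A. \<forall>y\<in>A. \<forall>i<r. x - y - \<alpha> i \<notin> \<int>)"

definition Md_T :: "nat \<Rightarrow> (nat \<Rightarrow> real) \<Rightarrow> real" where
  "Md_T r \<alpha> = Sup {measure lborel A | A. A \<in> sets borel \<and> A \<subseteq> {0..<1} \<and> diff_avoids r \<alpha> A}"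

definition Lambda :: "nat \<Rightarrow> (nat \<Rightarrow> real) \<Rightarrow> (nat \<Rightarrow> int) set" where
  "Lambda r \<alpha> = {n. (\<forall>i\<ge>r. n i = 0) \<and> (\<Sum>i<r. of_int (n i) * \<alpha> i) \<in> \<int>}"

inductive_set gen_subgroup :: "(nat \<Rightarrow> int) set \<Rightarrow> (nat \<Rightarrow> int) set" for G where
  zero: "(\<lambda>i. 0) \<in> gen_subgroup G"
| gen: "g \<in> G \<Longrightarrow> g \<in> gen_subgroup G"
| diff: "a \<in> gen_subgroup G \<Longrightarrow> b \<in> gen_subgroup G \<Longrightarrow> (\<lambda>i. a i - b i) \<in> gen_subgroup G"

end

theory Submission
  imports Defs
begin


lemma cos_pow_expand:
  fixes x :: real and K :: nat
  shows "complex_of_real (cos (pi*x) ^ (2*K)) =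
    (\<Sum>j\<le>2*K. complex_of_real (real (2*K choose j) / 4^K) * exp (\<i> * complex_of_real (2*pi*x*(real j - real K))))"
proof -
  define t where "t = pi * x"
  have c: "complex_of_real (cos t) = (exp (\<i> * of_real t) + exp (- (\<i> * of_real t))) / 2"
    using cos_exp_eq[of "of_real t"] by (simp add: cos_of_real)
  have "complex_of_real (cos t ^ (2*K)) = (exp (\<i> * of_real t) + exp (- (\<i> * of_real t)))^(2*K) / 2^(2*K)"
    by (simp add: c power_divide)
  also have "\<dots> = (\<Sum>j\<le>2*K. of_nat (2*K choose j) * exp (\<i> * of_real t)^j * exp (- (\<i> * of_real t))^(2*K-j)) / 2^(2*K)"
    by (simp add: binomial_ring)
  also have "\<dots> = (\<Sum>j\<le>2*K. complex_of_real (real (2*K choose j) / 4^K) * exp (\<i> * complex_of_real (2*pi*x*(real j - real K))))"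
    unfolding sum_divide_distrib
  proof (rule sum.cong[OF refl])
    fix j assume j: "j \<in> {..2*K}"
    have e: "exp (\<i> * of_real t)^j * exp (- (\<i> * of_real t))^(2*K-j) = exp (\<i> * complex_of_real (2*pi*x*(real j - real K)))"
    proof -
      have "exp (\<i> * of_real t)^j * exp (- (\<i> * of_real t))^(2*K-j)
          = exp (of_nat j * (\<i> * of_real t)) * exp (of_nat (2*K-j) * (- (\<i> * of_real t)))"
        by (simp only: exp_of_nat_mult)
      also have "\<dots> = exp (of_nat j * (\<i> * of_real t) + of_nat (2*K-j) * (- (\<i> * of_real t)))"
        by (simp only: exp_add)
      also have "of_nat j * (\<i> * of_real t) + of_nat (2*K-j) * (- (\<i> * of_real t)) = \<i> * complex_of_real (2*pi*x*(real j - real K))"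
        using j by (simp add: t_def of_nat_diff algebra_simps)
      finally show ?thesis .
    qed
    have "(4::complex)^K = 2^(2*K)" by (simp add: power_mult)
    then show "of_nat (2*K choose j) * exp (\<i> * of_real t)^j * exp (- (\<i> * of_real t))^(2*K-j) / 2^(2*K)
       = complex_of_real (real (2*K choose j) / 4^K) * exp (\<i> * complex_of_real (2*pi*x*(real j - real K)))"
      by (simp add: e mult.assoc)
  qed
  finally show ?thesis by (simp add: t_def)
qed

lemma prod_cos_expand:
  fixes x :: "nat \<Rightarrow> real" and K r :: nat
  shows "complex_of_real (\<Prod>i<r. cos (pi * x i) ^ (2*K)) =
    (\<Sum>g\<in>PiE {..<r} (\<lambda>_. {..2*K}). complex_of_real (\<Prod>i<r. real (2*K choose g i) / 4^K) *
        exp (\<i> * complex_of_real (2*pi * (\<Sum>i<r. x i * (real (g i) - real K)))))"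
proof -
  have "complex_of_real (\<Prod>i<r. cos (pi * x i) ^ (2*K)) = (\<Prod>i<r. complex_of_real (cos (pi * x i) ^ (2*K)))"
    by simp
  also have "\<dots> = (\<Prod>i<r. \<Sum>j\<le>2*K. complex_of_real (real (2*K choose j) / 4^K) * exp (\<i> * complex_of_real (2*pi*x i*(real j - real K))))"
    by (simp only: cos_pow_expand)
  also have "\<dots> = (\<Sum>g\<in>PiE {..<r} (\<lambda>_. {..2*K}). \<Prod>i<r. complex_of_real (real (2*K choose g i) / 4^K) * exp (\<i> * complex_of_real (2*pi*x i*(real (g i) - real K))))"
    by (rule prod_sum_PiE) auto
  also have "\<dots> = (\<Sum>g\<in>PiE {..<r} (\<lambda>_. {..2*K}). complex_of_real (\<Prod>i<r. real (2*K choose g i) / 4^K) *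
        exp (\<i> * complex_of_real (2*pi * (\<Sum>i<r. x i * (real (g i) - real K)))))"
  proof (rule sum.cong[OF refl])
    fix g
    have "exp (\<i> * complex_of_real (2*pi * (\<Sum>i<r. x i * (real (g i) - real K))))
        = exp (\<Sum>i<r. \<i> * complex_of_real (2*pi*x i*(real (g i) - real K)))"
      by (simp add: sum_distrib_left mult.assoc)
    also have "\<dots> = (\<Prod>i<r. exp (\<i> * complex_of_real (2*pi*x i*(real (g i) - real K))))"
      by (simp add: exp_sum)
    finally have E: "exp (\<i> * complex_of_real (2*pi * (\<Sum>i<r. x i * (real (g i) - real K)))) = (\<Prod>i<r. exp (\<i> * complex_of_real (2*pi*x i*(real (g i) - real K))))" .
    show "(\<Prod>i<r. complex_of_real (real (2*K choose g i) / 4^K) * exp (\<i> * complex_of_real (2*pi*x i*(real (g i) - real K))))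
      = complex_of_real (\<Prod>i<r. real (2*K choose g i) / 4^K) *
        exp (\<i> * complex_of_real (2*pi * (\<Sum>i<r. x i * (real (g i) - real K))))"
      by (simp only: E prod.distrib of_real_prod)
  qed
  finally show ?thesis .
qed

lemma geom_avg:
  fixes z :: complex
  assumes "norm z = 1"
  shows "(\<lambda>M. (\<Sum>m<M. z^m) / of_nat M) \<longlonglongrightarrow> (if z = 1 then 1 else 0)"
proof (cases "z = 1")
  case True
  have "\<forall>\<^sub>F M in sequentially. (\<Sum>m<M. z^m) / of_nat M = 1"
    using eventually_gt_at_top[of 0] by eventually_elim (simp add: True)
  then show ?thesis using True by (simp add: tendsto_eventually)
next
  case False
  have nz: "norm (1 - z) > 0" using False by simp
  have b: "norm ((\<Sum>m<M. z^m) / of_nat M) \<le> (2 / norm (1 - z)) / real M" for M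
  proof -
    have "norm (\<Sum>m<M. z^m) = norm (1 - z^M) / norm (1 - z)"
      using False by (simp add: sum_gp_strict norm_divide)
    also have "\<dots> \<le> 2 / norm (1 - z)"
    proof -
      have "norm (1 - z^M) \<le> norm (1::complex) + norm (z^M)" by (rule norm_triangle_ineq4)
      also have "\<dots> = 2" using assms by (simp add: norm_power)
      finally show ?thesis using nz by (simp add: divide_right_mono)
    qed
    finally have h: "norm (\<Sum>m<M. z^m) \<le> 2 / norm (1 - z)" .
    show ?thesis using divide_right_mono[OF h, of "real M"] by (simp add: norm_divide)
  qed
  have "(\<lambda>M. (2 / norm (1 - z)) / real M) \<longlonglongrightarrow> 0"
    by (intro tendsto_divide_0[OF tendsto_const] filterlim_at_top_imp_at_infinity filterlim_real_sequentially)
  then have "(\<lambda>M. (\<Sum>m<M. z^m) / of_nat M) \<longlonglongrightarrow> 0"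
    by (rule Lim_null_comparison[rotated]) (use b in \<open>simp only: always_eventually eventually_True\<close>)
  then show ?thesis using False by simp
qed

lemma cos_far:
  fixes x e :: real
  assumes "0 < e" "e \<le> 1/2" "\<And>z::int. \<bar>x - of_int z\<bar> \<ge> e"
  shows "cos (pi*x)^2 \<le> cos (pi*e)^2"
proof -
  define y where "y = x - of_int (round x)"
  have y1: "\<bar>y\<bar> \<le> 1/2"
  proof -
    have "\<bar>y\<bar> \<le> \<bar>x - of_int (floor x)\<bar>" "\<bar>y\<bar> \<le> \<bar>x - of_int (floor x + 1)\<bar>"
      unfolding y_def by (rule round_diff_minimal)+
    moreover have "x - of_int (floor x) \<ge> 0" "x - of_int (floor x + 1) < 0"
      by linarith+
    ultimately show ?thesis by linarith
  qed
  have y2: "\<bar>y\<bar> \<ge> e" using assms(3)[of "round x"] by (simp add: y_def)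
  have sq: "cos t ^ 2 = (1 + cos (2*t)) / 2" for t :: real
    by (simp add: cos_double cos_squared_eq)
  have "cos (2*(pi*x)) = cos (2*pi*y + of_int (round x) * (2 * pi))"
    by (simp add: y_def algebra_simps)
  also have "\<dots> = cos (2*pi*y)"
    using cos.plus_of_int[of "2*pi*y" "round x"] by simp
  also have "\<dots> = cos (2*pi*\<bar>y\<bar>)"
    by (metis abs_mult abs_of_nonneg cos_abs_real mult_nonneg_nonneg pi_ge_zero zero_le_numeral)
  also have "\<dots> \<le> cos (2*(pi*e))"
    by (rule cos_monotone_0_pi_le) (use y1 y2 assms in auto)
  finally show ?thesis unfolding sq by simp
qed

lemma poly_exp_lim:
  fixes c0 :: real and r :: nat
  assumes c0: "c0 > 0"
  shows "(\<lambda>K. (2*real K + 1)^r * exp (- c0 * real K)) \<longlonglongrightarrow> 0"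
proof -
  have f1: "filterlim (\<lambda>K::nat. c0 * real K) at_top sequentially"
    by (intro filterlim_tendsto_pos_mult_at_top[OF tendsto_const c0] filterlim_real_sequentially)
  have "(\<lambda>K. (c0 * real K)^r / exp (c0 * real K)) \<longlonglongrightarrow> 0"
    using filterlim_compose[OF tendsto_power_div_exp_0 f1] .
  then have g: "(\<lambda>K. (3/c0)^r * ((c0 * real K)^r / exp (c0 * real K))) \<longlonglongrightarrow> 0"
    by (rule tendsto_mult_right_zero)
  show ?thesis
  proof (rule Lim_null_comparison[OF _ g])
    show "\<forall>\<^sub>F K in sequentially. norm ((2*real K+1)^r * exp (- c0 * real K)) \<le> (3/c0)^r * ((c0 * real K)^r / exp (c0 * real K))"
      using eventually_ge_at_top[of "1::nat"]
    proof eventually_elim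
      case (elim K)
      have "(3/c0)^r * ((c0 * real K)^r / exp (c0 * real K)) = ((3/c0) * (c0 * real K))^r / exp (c0 * real K)"
        by (simp only: power_mult_distrib times_divide_eq_right mult.assoc)
      also have "(3/c0) * (c0 * real K) = 3 * real K" using c0 by simp
      finally have R: "(3/c0)^r * ((c0 * real K)^r / exp (c0 * real K)) = (3 * real K)^r / exp (c0 * real K)" .
      have "(2*real K+1)^r \<le> (3 * real K)^r" using elim by (intro power_mono) auto
      then have "(2*real K+1)^r / exp (c0 * real K) \<le> (3 * real K)^r / exp (c0 * real K)"
        by (intro divide_right_mono) auto
      moreover have "norm ((2*real K+1)^r * exp (- c0 * real K)) = (2*real K+1)^r / exp (c0 * real K)"
        by (simp add: exp_minus field_simps)
      ultimately show ?case using R by simp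
    qed
  qed
qed

lemma approx_half:
  fixes \<alpha> :: "nat \<Rightarrow> real" and r :: nat and \<epsilon> :: real
  assumes H: "\<And>n. (\<forall>i\<ge>r. n i = 0) \<Longrightarrow> (\<Sum>i<r. of_int (n i) * \<alpha> i) \<in> \<int> \<Longrightarrow> even (\<Sum>i<r. n i)"
    and "\<epsilon> > 0"
  shows "\<exists>m::nat. \<forall>i<r. \<exists>z::int. \<bar>real m * \<alpha> i - 1/2 - of_int z\<bar> < \<epsilon>"
proof (rule ccontr)
  assume nex: "\<not> ?thesis"
  define e where "e = min \<epsilon> (1/4)"
  have e: "0 < e" "e \<le> 1/4" "e \<le> \<epsilon>" using assms(2) by (auto simp: e_def)
  define x where "x m i = real m * \<alpha> i - 1/2" for m i
  have far: "\<exists>i<r. \<forall>z::int. \<bar>x m i - of_int z\<bar> \<ge> e" for m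
  proof (rule ccontr)
    assume "\<not> ?thesis"
    then have "\<forall>i<r. \<exists>z::int. \<bar>real m * \<alpha> i - 1/2 - of_int z\<bar> < \<epsilon>"
      using e unfolding x_def by (meson less_le_trans not_le)
    then show False using nex by blast
  qed
  define \<rho> where "\<rho> = cos (pi*e)^2"
  have pe: "0 < pi*e" "pi*e < pi/2" "pi*e \<le> pi"
    using e pi_gt_zero by (auto simp: mult_pos_pos)
  have cpos: "0 < cos (pi*e)"
    by (rule cos_gt_zero_pi) (use pe pi_gt_zero in linarith)+
  have clt: "cos (pi*e) < 1"
    using cos_monotone_0_pi[of 0 "pi*e"] pe by simp
  have \<rho>: "0 < \<rho>" "\<rho> < 1"
    unfolding \<rho>_def using cpos clt by (auto simp: power_less_one_iff)
  define p where "p K m = (\<Prod>i<r. cos (pi * x m i) ^ (2*K))" for K m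
  have pb: "p K m \<le> \<rho>^K" for K m
  proof -
    obtain i0 where i0: "i0 < r" "\<And>z::int. \<bar>x m i0 - of_int z\<bar> \<ge> e" using far[of m] by blast
    have f0: "cos (pi * x m i0) ^ (2*K) \<le> \<rho>^K"
    proof -
      have "cos (pi * x m i0) ^ 2 \<le> \<rho>" unfolding \<rho>_def
        by (rule cos_far) (use e i0 in auto)
      then have "(cos (pi * x m i0) ^ 2)^K \<le> \<rho>^K" by (intro power_mono) auto
      then show ?thesis by (simp add: power_mult)
    qed
    have "p K m = cos (pi * x m i0) ^ (2*K) * (\<Prod>i\<in>{..<r}-{i0}. cos (pi * x m i) ^ (2*K))"
      unfolding p_def using i0 by (simp add: prod.remove)
    also have "\<dots> \<le> \<rho>^K * 1"
    proof (rule mult_mono[OF f0])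
      show "(\<Prod>i\<in>{..<r}-{i0}. cos (pi * x m i) ^ (2*K)) \<le> 1"
      proof (rule prod_le_1)
        fix i show "0 \<le> cos (pi * x m i) ^ (2*K) \<and> cos (pi * x m i) ^ (2*K) \<le> 1"
          by (simp add: power_mult power_le_one abs_square_le_1 abs_cos_le_one)
      qed
      show "0 \<le> \<rho>^K" using \<rho> by simp
      show "0 \<le> (\<Prod>i\<in>{..<r}-{i0}. cos (pi * x m i) ^ (2*K))"
        by (intro prod_nonneg) (simp add: power_mult)
    qed
    finally show ?thesis by simp
  qed
  obtain K where K: "K \<ge> 1" "(2*real K+1)^r * \<rho>^K < 1"
  proof -
    define c0 where "c0 = - ln \<rho>"
    have c0: "c0 > 0" using \<rho> by (simp add: c0_def)
    have eqp: "exp (- c0 * real K) = \<rho>^K" for K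
    proof -
      have "exp (- c0 * real K) = exp (real K * ln \<rho>)" by (simp add: c0_def)
      also have "\<dots> = exp (ln \<rho>)^K" by (simp add: exp_of_nat_mult)
      finally show ?thesis using \<rho> by simp
    qed
    have "((\<lambda>K. (2*real K + 1)^r * exp (- c0 * real K)) \<longlongrightarrow> 0) at_top"
      by (rule poly_exp_lim[OF c0])
    then have "\<forall>\<^sub>F K in sequentially. (2*real K + 1)^r * exp (- c0 * real K) < 1"
      by (rule order_tendstoD) simp
    moreover have "\<forall>\<^sub>F K in sequentially. K \<ge> (1::nat)" by (rule eventually_ge_at_top)
    ultimately have "\<forall>\<^sub>F K in sequentially. K \<ge> 1 \<and> (2*real K+1)^r * \<rho>^K < 1"
    proof eventually_elim
      case (elim K)
      then show ?case using eqp[of K] by simp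
    qed
    then obtain K where "K \<ge> 1 \<and> (2*real K+1)^r * \<rho>^K < 1"
      unfolding eventually_sequentially by blast
    then show ?thesis using that by blast
  qed
  define c where "c j = real (2*K choose j) / 4^K" for j
  define PI where "PI = PiE {..<r} (\<lambda>_::nat. {..2*K})"
  define \<theta> where "\<theta> g = (\<Sum>i<r. \<alpha> i * (real (g i) - real K))" for g :: "nat \<Rightarrow> nat"
  define s where "s g = (\<Sum>i<r. (real (g i) - real K))" for g :: "nat \<Rightarrow> nat"
  define z where "z g = exp (\<i> * complex_of_real (2*pi*\<theta> g))" for g
  define w where "w g = complex_of_real (\<Prod>i<r. c (g i)) * exp (- \<i> * complex_of_real (pi * s g))" for g
  have finPI: "finite PI" unfolding PI_def by (simp add: finite_PiE)
  have pexp: "complex_of_real (p K m) = (\<Sum>g\<in>PI. w g * z g ^ m)" for m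
  proof -
    have "complex_of_real (p K m) = (\<Sum>g\<in>PI. complex_of_real (\<Prod>i<r. c (g i)) *
        exp (\<i> * complex_of_real (2*pi * (\<Sum>i<r. x m i * (real (g i) - real K)))))"
      unfolding p_def PI_def c_def by (rule prod_cos_expand)
    also have "\<dots> = (\<Sum>g\<in>PI. w g * z g ^ m)"
    proof (rule sum.cong[OF refl])
      fix g
      have E: "(\<Sum>i<r. x m i * (real (g i) - real K)) = real m * \<theta> g - s g / 2"
        unfolding x_def \<theta>_def s_def
        by (simp add: sum_distrib_left sum_divide_distrib flip: sum_subtractf) (rule sum.cong, auto simp: field_simps)
      have "2*pi * (\<Sum>i<r. x m i * (real (g i) - real K)) = real m * (2*pi*\<theta> g) + (- (pi * s g))"
        unfolding E by (simp add: algebra_simps)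
      then have "\<i> * complex_of_real (2*pi * (\<Sum>i<r. x m i * (real (g i) - real K)))
          = of_nat m * (\<i> * complex_of_real (2*pi*\<theta> g)) + (- \<i> * complex_of_real (pi * s g))"
        by (simp only: of_real_add of_real_mult of_real_of_nat_eq of_real_minus) (simp add: algebra_simps)
      then have "exp (\<i> * complex_of_real (2*pi * (\<Sum>i<r. x m i * (real (g i) - real K))))
          = z g ^ m * exp (- \<i> * complex_of_real (pi * s g))"
        by (simp only: exp_add exp_of_nat_mult z_def)
      then show "complex_of_real (\<Prod>i<r. c (g i)) *
        exp (\<i> * complex_of_real (2*pi * (\<Sum>i<r. x m i * (real (g i) - real K)))) = w g * z g ^ m"
        by (simp add: w_def)
    qed
    finally show ?thesis .
  qed
  define avg where "avg M = (\<Sum>m<M. p K m) / real M" for M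
  have avgc: "complex_of_real (avg M) = (\<Sum>g\<in>PI. w g * ((\<Sum>m<M. z g ^ m) / of_nat M))" for M
  proof -
    have "complex_of_real (avg M) = (\<Sum>m<M. complex_of_real (p K m)) / of_nat M"
      by (simp add: avg_def)
    also have "\<dots> = (\<Sum>m<M. \<Sum>g\<in>PI. w g * z g ^ m) / of_nat M" by (simp add: pexp)
    also have "\<dots> = (\<Sum>g\<in>PI. w g * ((\<Sum>m<M. z g ^ m) / of_nat M))"
      by (subst sum.swap) (simp add: sum_divide_distrib sum_distrib_left)
    finally show ?thesis .
  qed
  have normz: "norm (z g) = 1" for g by (simp add: z_def)
  have lim: "(\<lambda>M. complex_of_real (avg M)) \<longlonglongrightarrow> (\<Sum>g\<in>PI. w g * (if z g = 1 then 1 else 0))"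
    unfolding avgc by (intro tendsto_sum tendsto_mult_left geom_avg normz)
  have zg1: "z g = 1 \<longleftrightarrow> \<theta> g \<in> \<int>" for g
  proof -
    have "z g = 1 \<longleftrightarrow> (\<exists>n::int. 2*pi*\<theta> g = of_int (2*n) * pi)"
      unfolding z_def exp_eq_1 by simp
    also have "\<dots> \<longleftrightarrow> (\<exists>n::int. \<theta> g = of_int n)"
      by (auto simp: algebra_simps)
    also have "\<dots> \<longleftrightarrow> \<theta> g \<in> \<int>" by (auto elim: Ints_cases)
    finally show ?thesis .
  qed
  have wg: "w g = complex_of_real (\<Prod>i<r. c (g i))" if g: "g \<in> PI" "\<theta> g \<in> \<int>" for g
  proof -
    define n where "n i = (if i < r then int (g i) - int K else 0)" for i
    have "(\<Sum>i<r. of_int (n i) * \<alpha> i) = \<theta> g"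
      unfolding \<theta>_def n_def by (rule sum.cong) (auto simp: algebra_simps)
    then have "even (\<Sum>i<r. n i)" using H[of n] g by (auto simp: n_def)
    then obtain k where k: "(\<Sum>i<r. n i) = 2*k" by (auto elim: evenE)
    have "s g = of_int (\<Sum>i<r. n i)"
      unfolding s_def n_def by (simp add: of_int_sum)
    then have sk: "s g = 2 * of_int k" using k by simp
    have "exp (- \<i> * complex_of_real (pi * s g)) = exp (complex_of_real (2 * of_int (-k) * pi) * \<i>)"
      by (simp add: sk algebra_simps)
    also have "\<dots> = 1" by (rule exp_integer_2pi) simp
    finally show ?thesis by (simp add: w_def)
  qed
  define L where "L = (\<Sum>g\<in>{g\<in>PI. \<theta> g \<in> \<int>}. \<Prod>i<r. c (g i))"
  have limL: "(\<Sum>g\<in>PI. w g * (if z g = 1 then 1 else 0)) = complex_of_real L"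
  proof -
    have "(\<Sum>g\<in>PI. w g * (if z g = 1 then 1 else 0)) = (\<Sum>g\<in>PI. if \<theta> g \<in> \<int> then complex_of_real (\<Prod>i<r. c (g i)) else 0)"
      by (rule sum.cong) (auto simp: zg1 wg)
    also have "\<dots> = complex_of_real L"
      unfolding L_def using finPI by (simp add: sum.inter_filter) (rule sum.cong, auto)
    finally show ?thesis .
  qed
  have limR: "avg \<longlonglongrightarrow> L"
    using lim unfolding limL by (simp add: tendsto_of_real_iff)
  have avgb: "avg M \<le> \<rho>^K" for M
  proof (cases "M = 0")
    case True then show ?thesis using \<rho> by (simp add: avg_def)
  next
    case False
    have "(\<Sum>m<M. p K m) \<le> real M * \<rho>^K"
      using sum_bounded_above[of "{..<M}" "p K" "\<rho>^K"] pb by simp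
    then show ?thesis using False by (simp add: avg_def divide_le_eq mult.commute)
  qed
  have Lle: "L \<le> \<rho>^K"
    by (rule LIMSEQ_le_const2[OF limR]) (use avgb in blast)
  have cnn: "0 \<le> c j" for j by (simp add: c_def)
  define g0 where "g0 = restrict (\<lambda>_. K) {..<r}"
  have g0: "g0 \<in> {g\<in>PI. \<theta> g \<in> \<int>}"
    by (auto simp: g0_def PI_def \<theta>_def)
  have "(\<Prod>i<r. c (g0 i)) \<le> L"
    unfolding L_def using finPI g0 by (intro member_le_sum) (auto intro: prod_nonneg cnn)
  then have cKL: "c K ^ r \<le> L" by (simp add: g0_def)
  have cK: "1 / (2*real K + 1) \<le> c K"
  proof -
    have "(4::nat)^K = (\<Sum>j\<le>2*K. 2*K choose j)" by (simp add: choose_row_sum power_mult)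
    also have "\<dots> \<le> (\<Sum>j\<le>2*K. 2*K choose K)" by (intro sum_mono binomial_maximum')
    also have "\<dots> = (2*K+1) * (2*K choose K)" by simp
    finally have "real ((4::nat)^K) \<le> real ((2*K+1) * (2*K choose K))" by linarith
    then have "4^K \<le> (2*real K+1) * real (2*K choose K)" by (simp add: algebra_simps)
    then show ?thesis unfolding c_def by (simp add: field_simps)
  qed
  have "(1 / (2*real K + 1))^r \<le> c K ^ r"
    by (rule power_mono[OF cK]) simp
  then have "(1 / (2*real K + 1))^r \<le> \<rho>^K" using cKL Lle by linarith
  then have "1 \<le> (2*real K+1)^r * \<rho>^K"
    by (simp add: power_divide field_simps)
  then show False using K by linarith
qed


definition per :: "real set \<Rightarrow> bool" where "per S \<longleftrightarrow> (\<forall>x. x + 1 \<in> S \<longleftrightarrow> x \<in> S)"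
definition shiftS :: "real \<Rightarrow> real set \<Rightarrow> real set" where "shiftS t S = {x. x - t \<in> S}"
definition Pm :: "real set \<Rightarrow> real" where "Pm S = measure lebesgue (S \<inter> {0..<1})"

lemma per_nat: "per S \<Longrightarrow> x + real k \<in> S \<longleftrightarrow> x \<in> S"
proof (induction k arbitrary: x)
  case (Suc k)
  then have "x + real (Suc k) \<in> S \<longleftrightarrow> (x + real k) + 1 \<in> S" by (simp add: algebra_simps)
  also have "\<dots> \<longleftrightarrow> x + real k \<in> S" using Suc.prems by (simp add: per_def)
  finally show ?case using Suc by simp
qed simp

lemma per_int: "per S \<Longrightarrow> x + of_int n \<in> S \<longleftrightarrow> x \<in> S"
proof (cases n rule: int_cases)
  case (nonneg k)
  assume "per S" then show ?thesis using per_nat[of S x k] nonneg by simp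
next
  case (neg k)
  assume "per S"
  have e: "x + of_int n = x - real (Suc k)" using neg by simp
  have "(x - real (Suc k)) + real (Suc k) = x" by simp
  then show ?thesis using per_nat[OF \<open>per S\<close>, of "x - real (Suc k)" "Suc k"] e by metis
qed

lemma shift_image: "shiftS t S = (+) t ` S"
  unfolding shiftS_def by (auto simp: image_iff) (metis add.commute diff_add_cancel)

lemma shift_sets: "S \<in> sets lebesgue \<Longrightarrow> shiftS t S \<in> sets lebesgue"
  unfolding shift_image by (rule lebesgue_sets_translation)

lemma shift_lmeas: "S \<in> lmeasurable \<Longrightarrow> shiftS t S \<in> lmeasurable"
  unfolding shift_image by (rule measurable_translation)

lemma shift_measure: "measure lebesgue (shiftS t S) = measure lebesgue S"
  unfolding shift_image by (rule measure_translation)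

lemma per_shift: "per S \<Longrightarrow> per (shiftS t S)"
  unfolding per_def shiftS_def by (simp add: algebra_simps) (metis add.commute diff_add_eq)

lemma shift_int: "per S \<Longrightarrow> shiftS (t + of_int n) S = shiftS t S"
  unfolding shiftS_def using per_int[of S "_ - t" "- n"] by (auto simp: algebra_simps)

lemma shift_add: "shiftS a (shiftS b S) = shiftS (a + b) S"
  unfolding shiftS_def by (auto simp: algebra_simps)

lemma shift_mono: "S \<subseteq> T \<Longrightarrow> shiftS t S \<subseteq> shiftS t T"
  unfolding shiftS_def by auto

lemma lmeas_bounded: fixes S :: "real set" shows "S \<in> sets lebesgue \<Longrightarrow> S \<subseteq> {a..b} \<Longrightarrow> S \<in> lmeasurable"
  using bounded_subset[OF compact_imp_bounded[OF compact_Icc[of a b]]] by (intro bounded_set_imp_lmeasurable) auto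

lemma measure_disj_Un:
  assumes "A \<in> lmeasurable" "B \<in> lmeasurable" "A \<inter> B = {}"
  shows "measure lebesgue (A \<union> B) = measure lebesgue A + measure lebesgue B"
  using measure_Un3[OF assms(1,2)] assms(3) by simp

lemma Pm_shift:
  assumes "per S" "S \<in> sets lebesgue"
  shows "Pm (shiftS t S) = Pm S"
proof -
  define u where "u = frac t"
  have u: "0 \<le> u" "u < 1" by (auto simp: u_def frac_lt_1)
  have "shiftS t S = shiftS (u + of_int (floor t)) S" by (simp add: u_def frac_def)
  also have "\<dots> = shiftS u S" by (rule shift_int[OF assms(1)])
  finally have tu: "shiftS t S = shiftS u S" .
  define S1 where "S1 = S \<inter> {0..<1-u}"
  define S2 where "S2 = S \<inter> {1-u..<1}"
  have S12: "S1 \<in> lmeasurable" "S2 \<in> lmeasurable"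
    unfolding S1_def S2_def using assms(2) u
    by (auto intro!: lmeas_bounded[where a=0 and b=1])
  have eq: "shiftS u S \<inter> {0..<1} = shiftS u S1 \<union> shiftS (u-1) S2"
  proof (intro equalityI subsetI)
    fix x assume x: "x \<in> shiftS u S \<inter> {0..<1}"
    show "x \<in> shiftS u S1 \<union> shiftS (u-1) S2"
    proof (cases "x \<ge> u")
      case True then show ?thesis using x by (auto simp: shiftS_def S1_def)
    next
      case False
      have "(x - u) + 1 \<in> S" using x assms(1) by (simp add: per_def shiftS_def)
      then show ?thesis using x False by (auto simp: shiftS_def S2_def algebra_simps)
    qed
  next
    fix x assume x: "x \<in> shiftS u S1 \<union> shiftS (u-1) S2"
    then show "x \<in> shiftS u S \<inter> {0..<1}"
    proof
      assume "x \<in> shiftS u S1" then show ?thesis using u by (auto simp: shiftS_def S1_def)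
    next
      assume x2: "x \<in> shiftS (u-1) S2"
      then have "(x - u) + 1 \<in> S" by (simp add: shiftS_def S2_def algebra_simps)
      then have "x - u \<in> S" using assms(1) by (simp add: per_def)
      then show ?thesis using x2 u by (auto simp: shiftS_def S2_def)
    qed
  qed
  have disj: "shiftS u S1 \<inter> shiftS (u-1) S2 = {}"
    by (auto simp: shiftS_def S1_def S2_def)
  have "Pm (shiftS t S) = measure lebesgue (shiftS u S1 \<union> shiftS (u-1) S2)"
    unfolding Pm_def tu eq ..
  also have "\<dots> = measure lebesgue S1 + measure lebesgue S2"
    using measure_disj_Un[OF shift_lmeas[OF S12(1)] shift_lmeas[OF S12(2)] disj]
    by (simp add: shift_measure)
  also have "\<dots> = measure lebesgue (S1 \<union> S2)"
    by (rule measure_disj_Un[symmetric, OF S12]) (auto simp: S1_def S2_def)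
  also have "S1 \<union> S2 = S \<inter> {0..<1}" using u by (auto simp: S1_def S2_def)
  finally show ?thesis by (simp add: Pm_def)
qed

lemma emeas_lt:
  assumes "X \<in> lmeasurable" "emeasure lebesgue X < ennreal e"
  shows "measure lebesgue X < e"
  using assms emeasure_eq_measure2[OF assms(1)]
  by (metis ennreal_less_iff ennreal_neg le_less_linear measure_nonneg not_less_zero)

lemma shift_cont:
  assumes A: "A \<in> sets lebesgue" "A \<subseteq> {0..<1}" and pos: "measure lebesgue A > 0"
  shows "\<exists>\<delta>>0. \<forall>t. \<bar>t\<bar> < \<delta> \<longrightarrow> measure lebesgue (A \<inter> shiftS t A) > 0"
proof -
  define e where "e = measure lebesgue A / 3"
  have e: "e > 0" using pos by (simp add: e_def)
  have Al: "A \<in> lmeasurable" using A by (intro lmeas_bounded[where a=0 and b=1]) auto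
  obtain K where K: "closed K" "K \<subseteq> A" "A - K \<in> lmeasurable" "emeasure lebesgue (A - K) < ennreal e"
    using sets_lebesgue_inner_closed[OF A(1) e] by blast
  obtain U where U: "open U" "A \<subseteq> U" "U - A \<in> lmeasurable" "emeasure lebesgue (U - A) < ennreal e"
    using sets_lebesgue_outer_open[OF A(1) e] by blast
  have Kc: "compact K"
  proof -
    have "K \<subseteq> {0..1}" using K(2) A(2) by auto
    then have "bounded K" using bounded_subset[OF compact_imp_bounded[OF compact_Icc[of 0 1]]] by blast
    then show ?thesis using K(1) by (simp add: compact_eq_bounded_closed)
  qed
  have Kl: "K \<in> lmeasurable" using Kc by (rule lmeasurable_compact)
  obtain \<delta> where \<delta>: "\<delta> > 0" "(\<Union>x\<in>K. ball x \<delta>) \<subseteq> U"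
    using compact_subset_open_imp_ball_epsilon_subset[OF Kc U(1)] K(2) U(2) by blast
  have mAK: "measure lebesgue (A - K) < e" by (rule emeas_lt[OF K(3,4)])
  have mUA: "measure lebesgue (U - A) < e" by (rule emeas_lt[OF U(3,4)])
  have mK: "measure lebesgue A \<le> measure lebesgue K + measure lebesgue (A - K)"
    using measurable_measure_Diff[OF Al _ K(2)] Kl by (simp add: fmeasurableD)
  show ?thesis
  proof (intro exI conjI allI impI)
    show "\<delta> > 0" by fact
    fix t :: real assume t: "\<bar>t\<bar> < \<delta>"
    have sub: "shiftS t K \<subseteq> U"
    proof
      fix x assume "x \<in> shiftS t K"
      then have "x - t \<in> K" by (simp add: shiftS_def)
      moreover have "x \<in> ball (x - t) \<delta>" using t by (simp add: dist_real_def)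
      ultimately show "x \<in> U" using \<delta>(2) by blast
    qed
    have SKl: "shiftS t K \<in> lmeasurable" by (rule shift_lmeas[OF Kl])
    have SAl: "shiftS t A \<in> lmeasurable" by (rule shift_lmeas[OF Al])
    have "shiftS t K \<subseteq> (A \<inter> shiftS t A) \<union> (U - A)"
      using sub shift_mono[OF K(2), of t] by blast
    then have "measure lebesgue (shiftS t K) \<le> measure lebesgue ((A \<inter> shiftS t A) \<union> (U - A))"
      by (intro measure_mono_fmeasurable) (use SKl Al SAl U(3) in \<open>auto intro: fmeasurableD\<close>)
    also have "\<dots> \<le> measure lebesgue (A \<inter> shiftS t A) + measure lebesgue (U - A)"
      by (rule measure_Un_le) (use Al SAl U(3) in \<open>auto intro: fmeasurableD\<close>)
    finally have "measure lebesgue K \<le> measure lebesgue (A \<inter> shiftS t A) + measure lebesgue (U - A)"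
      by (simp add: shift_measure)
    then show "measure lebesgue (A \<inter> shiftS t A) > 0"
      using mK mAK mUA e_def pos by linarith
  qed
qed

definition perB :: "real set \<Rightarrow> real set" where "perB A = {x. \<exists>z::int. x - of_int z \<in> A}"

lemma per_perB: "per (perB A)"
  unfolding per_def perB_def mem_Collect_eq
proof (intro allI iffI)
  fix x assume "\<exists>z::int. x + 1 - of_int z \<in> A"
  then obtain z :: int where "x + 1 - of_int z \<in> A" by blast
  then have "x - of_int (z - 1) \<in> A" by (simp add: algebra_simps)
  then show "\<exists>z::int. x - of_int z \<in> A" by blast
next
  fix x assume "\<exists>z::int. x - of_int z \<in> A"
  then obtain z :: int where "x - of_int z \<in> A" by blast
  then have "x + 1 - of_int (z + 1) \<in> A" by (simp add: algebra_simps)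
  then show "\<exists>z::int. x + 1 - of_int z \<in> A" by blast
qed

lemma perB_sets: "A \<in> sets lebesgue \<Longrightarrow> perB A \<in> sets lebesgue"
proof -
  assume A: "A \<in> sets lebesgue"
  have "perB A = (\<Union>z\<in>(UNIV::int set). shiftS (of_int z) A)"
    by (auto simp: perB_def shiftS_def)
  also have "\<dots> \<in> sets lebesgue"
    by (rule sets.countable_UN') (auto intro: shift_sets[OF A])
  finally show ?thesis .
qed

lemma perB_inter: "A \<subseteq> {0..<1} \<Longrightarrow> perB A \<inter> {0..<1} = A"
proof (intro equalityI subsetI)
  fix x assume A: "A \<subseteq> {0..<1}" and x: "x \<in> perB A \<inter> {0..<1}"
  then obtain z :: int where z: "x - of_int z \<in> A" by (auto simp: perB_def)
  then have "0 \<le> x - of_int z" "x - of_int z < 1" using A by auto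
  moreover have "0 \<le> x" "x < 1" using x by auto
  ultimately have "-1 < z" "z < 1" by linarith+
  then have "z = 0" by simp
  then show "x \<in> A" using z by simp
next
  fix x assume "A \<subseteq> {0..<1}" "x \<in> A"
  then show "x \<in> perB A \<inter> {0..<1}" by (auto simp: perB_def intro: exI[of _ 0])
qed

lemma perB_sub: "A \<subseteq> perB A"
  by (auto simp: perB_def intro: exI[of _ 0])

lemma Int01: "S \<in> sets lebesgue \<Longrightarrow> S \<inter> {0..<1::real} \<in> lmeasurable"
  by (rule lmeas_bounded[where a=0 and b=1]) auto

lemma Pm_le1: "S \<in> sets lebesgue \<Longrightarrow> Pm S \<le> 1"
proof -
  assume S: "S \<in> sets lebesgue"
  have "Pm S \<le> measure lebesgue {0..<1::real}"
    unfolding Pm_def by (rule measure_mono_fmeasurable) (use S in \<open>auto intro: lmeas_bounded[where a=0 and b=1]\<close>)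
  also have "\<dots> = 1" by simp
  finally show ?thesis .
qed

lemma Pm_disj:
  assumes "S \<in> sets lebesgue" "T \<in> sets lebesgue" "S \<inter> T = {}"
  shows "Pm (S \<union> T) = Pm S + Pm T"
proof -
  have "(S \<union> T) \<inter> {0..<1} = (S \<inter> {0..<1}) \<union> (T \<inter> {0..<1})" by auto
  then show ?thesis unfolding Pm_def using assms
    by (simp, intro measure_disj_Un) (auto intro: Int01)
qed

lemma Pm_Un_le:
  assumes "S \<in> sets lebesgue" "T \<in> sets lebesgue"
  shows "Pm (S \<union> T) \<le> Pm S + Pm T"
proof -
  have "(S \<union> T) \<inter> {0..<1} = (S \<inter> {0..<1}) \<union> (T \<inter> {0..<1})" by auto
  then show ?thesis unfolding Pm_def using assms
    by (simp, intro measure_Un_le) auto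
qed

lemma le_half:
  assumes A: "A \<in> sets lebesgue" "A \<subseteq> {0..<1}" and disj: "perB A \<inter> shiftS a (perB A) = {}"
  shows "measure lebesgue A \<le> 1/2"
proof -
  have B: "perB A \<in> sets lebesgue" "per (perB A)" using perB_sets[OF A(1)] per_perB by auto
  have "Pm (perB A \<union> shiftS a (perB A)) = Pm (perB A) + Pm (shiftS a (perB A))"
    by (rule Pm_disj) (use B disj in \<open>auto intro: shift_sets\<close>)
  also have "\<dots> = 2 * measure lebesgue A"
    using Pm_shift[OF B(2,1)] perB_inter[OF A(2)] by (simp add: Pm_def)
  moreover have "perB A \<union> shiftS a (perB A) \<in> sets lebesgue" using B by (auto intro: shift_sets)
  ultimately show ?thesis using Pm_le1[of "perB A \<union> shiftS a (perB A)"] by linarith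
qed

lemma per_Un: "per S \<Longrightarrow> per T \<Longrightarrow> per (S \<union> T)"
  by (auto simp: per_def)

lemma per_Compl: "per S \<Longrightarrow> per (- S)"
  by (auto simp: per_def)

lemma shift0: "shiftS 0 S = S" by (simp add: shiftS_def)

lemma shift_Un: "shiftS t (S \<union> T) = shiftS t S \<union> shiftS t T" by (auto simp: shiftS_def)

lemma no_half:
  assumes A: "A \<in> sets lebesgue" "A \<subseteq> {0..<1}" "measure lebesgue A = 1/2"
    and disj: "perB A \<inter> shiftS a (perB A) = {}" and irr: "a \<notin> \<rat>"
  shows False
proof -
  define B where "B = perB A"
  have B: "B \<in> sets lebesgue" "per B" unfolding B_def using perB_sets[OF A(1)] per_perB by auto
  have PB: "Pm B = 1/2" using perB_inter[OF A(2)] A(3) by (simp add: Pm_def B_def)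
  define C where "C = - (B \<union> shiftS a B)"
  have BU: "B \<union> shiftS a B \<in> sets lebesgue" using B shift_sets by auto
  have Cs: "C \<in> sets lebesgue" "per C"
    unfolding C_def using per_Compl[OF per_Un[OF B(2) per_shift[OF B(2)]]] BU
    by (simp_all only: Compl_in_sets_lebesgue)
  have PC: "Pm C = 0"
  proof -
    have "Pm (C \<union> (B \<union> shiftS a B)) = Pm C + Pm (B \<union> shiftS a B)"
      by (rule Pm_disj) (use Cs B in \<open>auto simp: C_def intro: shift_sets\<close>)
    moreover have "Pm (B \<union> shiftS a B) = Pm B + Pm (shiftS a B)"
      by (rule Pm_disj) (use B disj in \<open>auto simp: B_def intro: shift_sets\<close>)
    moreover have "Pm (shiftS a B) = Pm B" by (rule Pm_shift[OF B(2,1)])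
    moreover have "C \<union> (B \<union> shiftS a B) = UNIV" by (auto simp: C_def)
    moreover have "Pm UNIV = 1" by (simp add: Pm_def)
    ultimately show ?thesis using PB by simp
  qed
  have step2: "shiftS (2*a) B \<subseteq> B \<union> C"
  proof
    fix x assume x: "x \<in> shiftS (2*a) B"
    then have "x - a \<in> shiftS a B" by (simp add: shiftS_def algebra_simps)
    then have "x - a \<notin> B" using disj by (auto simp: B_def)
    then have "x \<notin> shiftS a B" by (simp add: shiftS_def)
    then show "x \<in> B \<union> C" by (auto simp: C_def)
  qed
  have Nk: "\<exists>N. N \<in> sets lebesgue \<and> per N \<and> Pm N = 0 \<and> shiftS (2 * real k * a) B \<subseteq> B \<union> N" for k :: nat
  proof (induction k)
    case 0
    show ?case by (intro exI[of _ "{}"]) (auto simp: shift0 per_def Pm_def)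
  next
    case (Suc k)
    then obtain N where N: "N \<in> sets lebesgue" "per N" "Pm N = 0" "shiftS (2 * real k * a) B \<subseteq> B \<union> N"
      by blast
    define N' where "N' = C \<union> shiftS (2*a) N"
    have "shiftS (2 * real (Suc k) * a) B = shiftS (2*a) (shiftS (2 * real k * a) B)"
      by (simp add: shift_add algebra_simps)
    also have "\<dots> \<subseteq> shiftS (2*a) (B \<union> N)" by (rule shift_mono[OF N(4)])
    also have "\<dots> \<subseteq> B \<union> N'" using step2 by (auto simp: shift_Un N'_def)
    finally have sub: "shiftS (2 * real (Suc k) * a) B \<subseteq> B \<union> N'" .
    have N's: "N' \<in> sets lebesgue" "per N'"
      unfolding N'_def using Cs N by (auto intro!: per_Un per_shift shift_sets)
    have "Pm N' \<le> Pm C + Pm (shiftS (2*a) N)"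
      unfolding N'_def by (rule Pm_Un_le) (use Cs N in \<open>auto intro: shift_sets\<close>)
    also have "\<dots> = 0" using PC Pm_shift[OF N(2,1)] N(3) by simp
    finally have "Pm N' = 0" using measure_nonneg[of lebesgue "N' \<inter> {0..<1}"] unfolding Pm_def by linarith
    then show ?case using sub N's by blast
  qed
  have Bodd: "measure lebesgue (A \<inter> shiftS ((2 * real k + 1) * a) B) = 0" for k :: nat
  proof -
    obtain N where N: "N \<in> sets lebesgue" "per N" "Pm N = 0" "shiftS (2 * real k * a) B \<subseteq> B \<union> N"
      using Nk by blast
    have sub: "A \<inter> shiftS ((2 * real k + 1) * a) B \<subseteq> shiftS a N \<inter> {0..<1}"
    proof
      fix x assume x: "x \<in> A \<inter> shiftS ((2 * real k + 1) * a) B"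
      then have xB: "x \<in> B" using perB_sub[of A] by (auto simp: B_def)
      then have "x \<notin> shiftS a B" using disj by (auto simp: B_def)
      then have "x - a \<notin> B" by (simp add: shiftS_def)
      moreover have "x - a \<in> shiftS (2 * real k * a) B" using x by (simp add: shiftS_def algebra_simps)
      ultimately have "x - a \<in> N" using N(4) by blast
      then show "x \<in> shiftS a N \<inter> {0..<1}" using x A(2) by (auto simp: shiftS_def)
    qed
    have "measure lebesgue (A \<inter> shiftS ((2 * real k + 1) * a) B) \<le> Pm (shiftS a N)"
      unfolding Pm_def using sub
      by (intro measure_mono_fmeasurable) (use A(1) B N in \<open>auto intro!: Int01 shift_sets\<close>)
    also have "\<dots> = 0" using Pm_shift[OF N(2,1)] N(3) by simp
    finally show ?thesis using measure_nonneg[of lebesgue "A \<inter> shiftS ((2 * real k + 1) * a) B"] by linarith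
  qed
  obtain \<delta> where \<delta>: "\<delta> > 0" "\<And>t. \<bar>t\<bar> < \<delta> \<Longrightarrow> measure lebesgue (A \<inter> shiftS t A) > 0"
    using shift_cont[OF A(1,2)] A(3) by auto
  have irr2: "2*a \<notin> \<rat>"
  proof
    assume "2*a \<in> \<rat>"
    then have "(2*a)/2 \<in> \<rat>" by (intro Rats_divide) auto
    then show False using irr by simp
  qed
  obtain h k where hk: "k > 0" "\<bar>of_int k * (2*a) - of_int h - (-a)\<bar> < \<delta>"
    using sequence_of_fractional_parts_is_dense[OF irr2 \<delta>(1)] by blast
  define t where "t = (2 * real (nat k) + 1) * a - of_int h"
  have tb: "\<bar>t\<bar> < \<delta>" using hk by (simp add: t_def algebra_simps)
  have "shiftS t B = shiftS (t + of_int h) B" by (rule shift_int[symmetric, OF B(2)])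
  also have "\<dots> = shiftS ((2 * real (nat k) + 1) * a) B" by (simp add: t_def)
  finally have tB: "shiftS t B = shiftS ((2 * real (nat k) + 1) * a) B" .
  have "A \<inter> shiftS t A \<subseteq> A \<inter> shiftS ((2 * real (nat k) + 1) * a) B"
    using shift_mono[OF perB_sub[of A], of t] tB by (auto simp: B_def)
  then have "measure lebesgue (A \<inter> shiftS t A) \<le> measure lebesgue (A \<inter> shiftS ((2 * real (nat k) + 1) * a) B)"
    by (intro measure_mono_fmeasurable) (use A(1,2) B in \<open>auto intro!: shift_sets lmeas_bounded[where a=0 and b=1] simp: subset_iff\<close>)
  then show False using Bodd[of "nat k"] \<delta>(2)[OF tb] by linarith
qed

lemma Ico_scaled:
  fixes m j :: nat and x c :: real assumes "m \<ge> 1"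
  shows "x \<in> {real j / m ..< (real j + c)/m} \<longleftrightarrow> real j \<le> m * x \<and> m * x < real j + c"
proof -
  have m: "real m > 0" using assms by simp
  show ?thesis using m by (simp add: divide_le_eq less_divide_eq mult.commute)
qed

lemma construct:
  fixes m :: nat and c :: real
  assumes m: "m \<ge> 1" and c: "0 < c" "c < 1"
  defines "A \<equiv> (\<Union>j<m. {real j / m ..< (real j + c)/m})"
  shows "A \<in> sets borel" "A \<subseteq> {0..<1}" "measure lborel A = c"
    "\<And>x::real. x \<in> A \<Longrightarrow> \<exists>j::int. 0 \<le> real m * x - of_int j \<and> real m * x - of_int j < c"
proof -
  show "A \<in> sets borel" unfolding A_def by (intro sets.finite_UN) auto
  show "A \<subseteq> {0..<1}"
  proof
    fix x assume "x \<in> A"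
    then obtain j where j: "j < m" "real j \<le> m * x" "m * x < real j + c"
      using Ico_scaled[OF m] by (auto simp: A_def)
    have "real j + 1 \<le> real m" using j(1) by linarith
    then have "real j + c \<le> real m" using c by linarith
    then have h1: "0 \<le> real m * x" "real m * x < real m * 1" using j by linarith+
    have mp: "real m > 0" using m by simp
    have "0 \<le> x" using h1(1) mp by (simp add: zero_le_mult_iff)
    moreover have "x < 1" using h1(2) mp by (simp only: mult_less_cancel_left_pos)
    ultimately show "x \<in> {0..<1}" by simp
  qed
  show "\<And>x::real. x \<in> A \<Longrightarrow> \<exists>j::int. 0 \<le> real m * x - of_int j \<and> real m * x - of_int j < c"
  proof -
    fix x assume "x \<in> A"
    then obtain j where j: "real j \<le> m * x" "m * x < real j + c"
      using Ico_scaled[OF m] by (auto simp: A_def)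
    then show "\<exists>j::int. 0 \<le> real m * x - of_int j \<and> real m * x - of_int j < c"
      by (intro exI[of _ "int j"]) (simp add: algebra_simps)
  qed
  have disj: "disjoint_family_on (\<lambda>j. {real j / m ..< (real j + c)/m}) {..<m}"
    unfolding disjoint_family_on_def
  proof (intro ballI impI)
    fix i j assume "i \<in> {..<m}" "j \<in> {..<m}" "i \<noteq> j"
    show "{real i / m ..< (real i + c)/m} \<inter> {real j / m ..< (real j + c)/m} = {}"
    proof (rule ccontr)
      assume "\<not> ?thesis"
      then obtain x where "x \<in> {real i / m ..< (real i + c)/m}" "x \<in> {real j / m ..< (real j + c)/m}" by blast
      then have "real i \<le> m * x" "m * x < real i + c" "real j \<le> m * x" "m * x < real j + c"
        using Ico_scaled[OF m] by auto
      then have "real i < real j + 1" "real j < real i + 1" using c by linarith+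
      then show False using \<open>i \<noteq> j\<close> by linarith
    qed
  qed
  have le: "real j / m \<le> (real j + c)/m" for j using c m by (simp add: divide_right_mono)
  have "measure lborel A = (\<Sum>j<m. measure lborel {real j / m ..< (real j + c)/m})"
    unfolding A_def
    by (rule measure_finite_Union) (use disj in \<open>auto simp: emeasure_lborel_Ico[OF le]\<close>)
  also have "\<dots> = (\<Sum>j<m. c / m)"
  proof (rule sum.cong[OF refl])
    fix j
    have "real j / m \<le> (real j + c)/m" using c m by (simp add: divide_right_mono)
    then show "measure lborel {real j / m ..< (real j + c)/m} = c / m"
      by (simp add: diff_divide_distrib[symmetric])
  qed
  also have "\<dots> = c" using m by simp
  finally show "measure lborel A = c" .
qed

lemma diff_avoids_disj:
  assumes "diff_avoids r \<alpha> A" "i < r"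
  shows "perB A \<inter> shiftS (\<alpha> i) (perB A) = {}"
proof (rule ccontr)
  assume "\<not> ?thesis"
  then obtain x where "x \<in> perB A" "x - \<alpha> i \<in> perB A" by (auto simp: shiftS_def)
  then obtain z1 z2 :: int where z: "x - of_int z1 \<in> A" "x - \<alpha> i - of_int z2 \<in> A"
    by (auto simp: perB_def)
  have "(x - of_int z1) - (x - \<alpha> i - of_int z2) - \<alpha> i = of_int (z2 - z1)" by simp
  then have "(x - of_int z1) - (x - \<alpha> i - of_int z2) - \<alpha> i \<in> \<int>" by simp
  then show False using assms z unfolding diff_avoids_def by blast
qed

theorem mainTheorem14:
  fixes r :: nat and \<alpha> :: "nat \<Rightarrow> real"
  assumes "r \<ge> 1"
    and "\<exists>G. gen_subgroup G = Lambda r \<alpha> \<and> (\<forall>g\<in>G. even (\<Sum>i<r. g i))"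
  shows "Md_T r \<alpha> = 1/2 \<and>
    ((\<exists>i<r. \<alpha> i \<notin> \<rat>) \<longrightarrow>
      \<not> (\<exists>A. A \<in> sets borel \<and> A \<subseteq> {0..<1} \<and> diff_avoids r \<alpha> A \<and> measure lborel A = 1/2))"
proof -
  obtain G where G: "gen_subgroup G = Lambda r \<alpha>" "\<forall>g\<in>G. even (\<Sum>i<r. g i)" using assms(2) by blast
  have evg: "n \<in> gen_subgroup G \<Longrightarrow> even (\<Sum>i<r. n i)" for n
    by (induction rule: gen_subgroup.induct) (use G(2) in \<open>auto simp: sum_subtractf\<close>)
  have H: "\<And>n. (\<forall>i\<ge>r. n i = 0) \<Longrightarrow> (\<Sum>i<r. of_int (n i) * \<alpha> i) \<in> \<int> \<Longrightarrow> even (\<Sum>i<r. n i)"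
    using evg G(1) by (auto simp: Lambda_def)
  have lebA: "A \<in> sets lebesgue \<and> measure lebesgue A = measure lborel A" if "A \<in> sets borel" for A :: "real set"
  proof -
    have "A \<in> sets lborel" using that by simp
    then show ?thesis by (simp add: sets_completionI_sets)
  qed
  define S where "S = {measure lborel A | A. A \<in> sets borel \<and> A \<subseteq> {0..<1} \<and> diff_avoids r \<alpha> A}"
  have ub: "x \<le> 1/2" if xS: "x \<in> S" for x
  proof -
    obtain A where A: "x = measure lborel A" "A \<in> sets borel" "A \<subseteq> {0..<1}" "diff_avoids r \<alpha> A"
      using xS unfolding S_def by blast
    have r0: "0 < r" using assms(1) by simp
    have "measure lebesgue A \<le> 1/2"
      by (rule le_half[OF conjunct1[OF lebA[OF A(2)]] A(3) diff_avoids_disj[OF A(4) r0]])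
    then show ?thesis using A(1) lebA[OF A(2)] by simp
  qed
  have lb: "1/2 - \<epsilon> \<in> S" if e: "0 < \<epsilon>" "\<epsilon> < 1/4" for \<epsilon>
  proof -
    obtain m :: nat where m: "\<forall>i<r. \<exists>z::int. \<bar>real m * \<alpha> i - 1/2 - of_int z\<bar> < \<epsilon>"
      using approx_half[OF H e(1)] by blast
    have m1: "m \<ge> 1"
    proof (rule ccontr)
      assume "\<not> m \<ge> 1"
      then have "m = 0" by simp
      have r0: "0 < r" using assms(1) by simp
      obtain z :: int where "\<bar>real m * \<alpha> 0 - 1/2 - of_int z\<bar> < \<epsilon>" using m r0 by blast
      then have "\<bar>- 1/2 - of_int z\<bar> < \<epsilon>" using \<open>m = 0\<close> by simp
      then have "-1/2 - \<epsilon> < of_int z" "of_int z < -1/2 + \<epsilon>" by linarith+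
      then have "-1 < z" "z < 0" using e by linarith+
      then show False by simp
    qed
    define c where "c = 1/2 - \<epsilon>"
    have c: "0 < c" "c < 1" using e by (auto simp: c_def)
    define A where "A = (\<Union>j<m. {real j / m ..< (real j + c)/m})"
    note cA = construct[OF m1 c, folded A_def]
    have da: "diff_avoids r \<alpha> A"
      unfolding diff_avoids_def
    proof (intro ballI allI impI notI)
      fix x y i assume x: "x \<in> A" and y: "y \<in> A" and i: "i < r" and w: "x - y - \<alpha> i \<in> \<int>"
      obtain jx :: int where jx: "0 \<le> real m * x - of_int jx" "real m * x - of_int jx < c" using cA(4)[OF x] by blast
      obtain jy :: int where jy: "0 \<le> real m * y - of_int jy" "real m * y - of_int jy < c" using cA(4)[OF y] by blast
      obtain w' :: int where w': "x - y - \<alpha> i = of_int w'" using w by (auto elim: Ints_cases)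
      obtain z :: int where z: "\<bar>real m * \<alpha> i - 1/2 - of_int z\<bar> < \<epsilon>" using m i by blast
      define N where "N = int m * w' + z - jx + jy"
      have eq: "(real m * x - of_int jx) - (real m * y - of_int jy) = of_int N + 1/2 + (real m * \<alpha> i - 1/2 - of_int z)"
      proof -
        have "real m * x - real m * y = real m * (x - y - \<alpha> i) + real m * \<alpha> i" by (simp add: algebra_simps)
        then show ?thesis unfolding N_def w' by (simp add: algebra_simps)
      qed
      have zz: "- \<epsilon> < real m * \<alpha> i - 1/2 - of_int z" "real m * \<alpha> i - 1/2 - of_int z < \<epsilon>"
        using z by linarith+
      have "-1 < real_of_int N" "real_of_int N < 0"
        using eq jx jy zz unfolding c_def by linarith+
      then have "-1 < N" "N < 0" by linarith+
      then show False by simp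
    qed
    have "1/2 - \<epsilon> = measure lborel A" using cA(3) by (simp add: c_def)
    then show ?thesis unfolding S_def using cA(1,2) da by blast
  qed
  have Md: "Md_T r \<alpha> = 1/2"
  proof -
    have "Sup S = 1/2"
    proof (rule cSup_eq_non_empty)
      show "S \<noteq> {}" using lb[of "1/8"] by auto
      show "\<And>x. x \<in> S \<Longrightarrow> x \<le> 1/2" by (rule ub)
      fix y assume y: "\<And>x. x \<in> S \<Longrightarrow> x \<le> y"
      show "1/2 \<le> y"
      proof (rule ccontr)
        assume "\<not> 1/2 \<le> y"
        define \<epsilon> where "\<epsilon> = min ((1/2 - y)/2) (1/8)"
        have "0 < \<epsilon>" "\<epsilon> < 1/4" using \<open>\<not> 1/2 \<le> y\<close> by (auto simp: \<epsilon>_def)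
        then have "1/2 - \<epsilon> \<le> y" using y lb by blast
        moreover have "\<epsilon> \<le> (1/2 - y)/2" unfolding \<epsilon>_def by (rule min.cobounded1)
        ultimately show False using \<open>\<not> 1/2 \<le> y\<close> by (simp add: field_simps)
      qed
    qed
    then show ?thesis by (simp add: Md_T_def S_def)
  qed
  have part2: "\<not> (\<exists>A. A \<in> sets borel \<and> A \<subseteq> {0..<1} \<and> diff_avoids r \<alpha> A \<and> measure lborel A = 1/2)"
    if ex: "\<exists>i<r. \<alpha> i \<notin> \<rat>"
  proof
    assume "\<exists>A. A \<in> sets borel \<and> A \<subseteq> {0..<1} \<and> diff_avoids r \<alpha> A \<and> measure lborel A = 1/2"
    then obtain A where A: "A \<in> sets borel" "A \<subseteq> {0..<1}" "diff_avoids r \<alpha> A" "measure lborel A = 1/2"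
      by blast
    obtain i where i: "i < r" "\<alpha> i \<notin> \<rat>" using ex by blast
    have "measure lebesgue A = 1/2" using lebA[OF A(1)] A(4) by simp
    then show False
      by (rule no_half[OF conjunct1[OF lebA[OF A(1)]] A(2) _ diff_avoids_disj[OF A(3) i(1)] i(2)])
  qed
  show ?thesis using Md part2 by blast
qed

end
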